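(* For any finite interval $\Lambda\subset\mathbb Z$ and any $N\in\{0,1,\dots,N^{\max}_\Lambda\}$ there is a root tiling $R\in\mathcal R_\Lambda$ with $N_\Lambda(R)=N$. Moreover $$\frac13\le\frac{N^{\max}_\Lambda}{|\Lambda|}\le\frac13+\frac{4}{3|\Lambda|},$$ so that $\lim_{|\Lambda|\to\infty}N^{\max}_\Lambda/|\Lambda|=1/3$.
   Context: Tiles on a finite interval $\Lambda$ occupy consecutive sites and carry 0/1 words (particle contents): void $0$; monomer $100$; left boundary dimer $11000$ (allowed only as the first tile of $\Lambda$); and, allowed only as the last tile: right dimer $011$, right 1-monomer $1$, right 2-monomer $10$. A root tiling $R$ of $\Lambda$ is a tiling of $\Lambda$ by consecutive tiles consisting of voids and monomers, optionally with a left boundary dimer as first tile and optionally with one of right dimer, right 1-monomer, right 2-monomer as last tile; $\mathcal R_\Lambda$ is the set of root tilings. $N_\Lambda(R)$ is the total number of $1$'s in the concatenated particle content of $R$, and $N^{\max}_\Lambda=\max\{N_\Lambda(R):R\in\mathcal R_\Lambda\}$. *)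

theory Defs
  imports Complex_Main
begin

datatype tile = Void | Monomer | LeftDimer | RightDimer | RightMono1 | RightMono2

fun content :: "tile \<Rightarrow> nat list" where
  "content Void = [0]"
| "content Monomer = [1,0,0]"
| "content LeftDimer = [1,1,0,0,0]"
| "content RightDimer = [0,1,1]"
| "content RightMono1 = [1]"
| "content RightMono2 = [1,0]"

fun right_tile :: "tile \<Rightarrow> bool" where
  "right_tile RightDimer = True"
| "right_tile RightMono1 = True"
| "right_tile RightMono2 = True"
| "right_tile _ = False"

definition root_tilings :: "int set \<Rightarrow> tile list set" where
  "root_tilings \<Lambda> = {ts.
      (\<forall>i<length ts. ts ! i = LeftDimer \<longrightarrow> i = 0) \<and>
      (\<forall>i<length ts. right_tile (ts ! i) \<longrightarrow> i = length ts - 1) \<and>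
      length (concat (map content ts)) = card \<Lambda>}"

definition particle_number :: "tile list \<Rightarrow> nat" where
  "particle_number ts = sum_list (concat (map content ts))"

definition N_max :: "int set \<Rightarrow> nat" where
  "N_max \<Lambda> = Max (particle_number ` root_tilings \<Lambda>)"

end

theory Submission
  imports Defs
begin

definition lc :: "tile list \<Rightarrow> nat" where
  "lc ts = length (concat (map content ts))"

definition valid :: "tile list \<Rightarrow> bool" where
  "valid ts = ((\<forall>i<length ts. ts ! i = LeftDimer \<longrightarrow> i = 0) \<and>
      (\<forall>i<length ts. right_tile (ts ! i) \<longrightarrow> i = length ts - 1))"

definition PP :: "tile list \<Rightarrow> bool" where
  "PP p = (p = [] \<or> p = [LeftDimer])"

definition SS :: "tile list \<Rightarrow> bool" where
  "SS s = (s = [] \<or> s = [RightDimer] \<or> s = [RightMono1] \<or> s = [RightMono2])"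

definition Ach :: "nat \<Rightarrow> nat \<Rightarrow> bool" where
  "Ach n N = (\<exists>ts. valid ts \<and> lc ts = n \<and> particle_number ts = N)"

lemma lc_append[simp]: "lc (xs @ ys) = lc xs + lc ys"
  by (simp add: lc_def)
lemma pn_append[simp]: "particle_number (xs @ ys) = particle_number xs + particle_number ys"
  by (simp add: particle_number_def)
lemma lc_Nil[simp]: "lc [] = 0" by (simp add: lc_def)
lemma pn_Nil[simp]: "particle_number [] = 0" by (simp add: particle_number_def)
lemma lc_Cons[simp]: "lc (t # xs) = length (content t) + lc xs" by (simp add: lc_def)
lemma pn_Cons[simp]: "particle_number (t # xs) = sum_list (content t) + particle_number xs"
  by (simp add: particle_number_def)

lemma rep_lc_M[simp]: "lc (replicate k Monomer) = 3 * k" by (induction k) auto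
lemma rep_pn_M[simp]: "particle_number (replicate k Monomer) = k" by (induction k) auto
lemma rep_lc_V[simp]: "lc (replicate k Void) = k" by (induction k) auto
lemma rep_pn_V[simp]: "particle_number (replicate k Void) = 0" by (induction k) auto

lemma mid_bound: "\<forall>t\<in>set m. t = Void \<or> t = Monomer \<Longrightarrow> 3 * particle_number m \<le> lc m"
  by (induction m) auto

lemma valid_build:
  assumes "PP p" "\<forall>t\<in>set m. t = Void \<or> t = Monomer" "SS s"
  shows "valid (p @ m @ s)"
proof -
  have h: "\<And>i. i < length m \<Longrightarrow> m!i = Void \<or> m!i = Monomer" using assms(2) nth_mem by blast
  have hp: "\<And>i. i < length p \<Longrightarrow> p!i = LeftDimer \<and> i = 0" using assms(1) by (auto simp: PP_def)
  have hs: "\<And>i. i < length s \<Longrightarrow> right_tile (s!i) \<and> i = 0" using assms(3) by (auto simp: SS_def)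
  have lp: "length p \<le> 1" using assms(1) by (auto simp: PP_def)
  show ?thesis unfolding valid_def
  proof (intro conjI allI impI)
    fix i assume i: "i < length (p @ m @ s)" and e: "(p @ m @ s) ! i = LeftDimer"
    show "i = 0"
    proof (cases "i < length p")
      case True then show ?thesis using hp by blast
    next
      case False
      then have e2: "(m @ s) ! (i - length p) = LeftDimer" using e by (simp add: nth_append)
      show ?thesis
      proof (cases "i - length p < length m")
        case True then show ?thesis using e2 h[of "i - length p"] by (simp add: nth_append)
      next
        case False
        have j: "i - length p - length m < length s" using i False \<open>\<not> i < length p\<close> by auto
        have "s ! (i - length p - length m) = LeftDimer" using e2 False by (simp add: nth_append)
        then show ?thesis using hs[OF j] by simp
      qed
    qed
  next
    fix i assume i: "i < length (p @ m @ s)" and e: "right_tile ((p @ m @ s) ! i)"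
    show "i = length (p @ m @ s) - 1"
    proof (cases "i < length p")
      case True then show ?thesis using hp[OF True] e True by (auto simp: nth_append)
    next
      case False
      then have e2: "right_tile ((m @ s) ! (i - length p))" using e by (simp add: nth_append)
      show ?thesis
      proof (cases "i - length p < length m")
        case True then show ?thesis using e2 h[of "i - length p"] by (auto simp: nth_append)
      next
        case False
        have "length s \<le> 1" using assms(3) by (auto simp: SS_def)
        then show ?thesis using i False \<open>\<not> i < length p\<close> by auto
      qed
    qed
  qed
qed

lemma valid_struct:
  assumes "valid ts"
  shows "\<exists>p m s. ts = p @ m @ s \<and> PP p \<and> (\<forall>t\<in>set m. t = Void \<or> t = Monomer) \<and> SS s"
proof -
  have L: "\<And>i. i < length ts \<Longrightarrow> ts ! i = LeftDimer \<Longrightarrow> i = 0"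
   and R: "\<And>i. i < length ts \<Longrightarrow> right_tile (ts ! i) \<Longrightarrow> i = length ts - 1"
    using assms unfolding valid_def by auto
  obtain p rest where 1: "ts = p @ rest" "PP p" "\<forall>i<length rest. rest ! i \<noteq> LeftDimer"
  proof (cases ts)
    case Nil
    then show ?thesis using that[of "[]" "[]"] by (simp add: PP_def)
  next
    case (Cons x ys)
    show ?thesis
    proof (cases "x = LeftDimer")
      case True
      have "\<forall>i<length ys. ys ! i \<noteq> LeftDimer"
      proof (intro allI impI)
        fix i assume "i < length ys" then show "ys ! i \<noteq> LeftDimer" using L[of "Suc i"] Cons by auto
      qed
      then show ?thesis using that[of "[LeftDimer]" ys] Cons True by (simp add: PP_def)
    next
      case False
      have "\<forall>i<length ts. ts ! i \<noteq> LeftDimer"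
      proof (intro allI impI)
        fix i assume "i < length ts" then show "ts ! i \<noteq> LeftDimer" using L[of i] Cons False by (cases i) auto
      qed
      then show ?thesis using that[of "[]" ts] by (simp add: PP_def)
    qed
  qed
  have R': "\<And>i. i < length rest \<Longrightarrow> right_tile (rest ! i) \<Longrightarrow> i = length rest - 1"
  proof -
    fix i assume "i < length rest" "right_tile (rest ! i)"
    then have "right_tile (ts ! (length p + i))" "length p + i < length ts" using 1 by (auto simp: nth_append)
    then have "length p + i = length ts - 1" using R by blast
    then show "i = length rest - 1" using 1 by simp
  qed
  have cls: "\<And>t. t \<noteq> LeftDimer \<Longrightarrow> \<not> right_tile t \<Longrightarrow> t = Void \<or> t = Monomer"
    by (case_tac t) auto
  obtain m s where 2: "rest = m @ s" "SS s" "\<forall>t\<in>set m. t = Void \<or> t = Monomer"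
  proof (cases rest rule: rev_cases)
    case Nil
    then show ?thesis using that[of "[]" "[]"] by (simp add: SS_def)
  next
    case (snoc zs y)
    have zs: "\<forall>t\<in>set zs. t = Void \<or> t = Monomer"
    proof
      fix t assume "t \<in> set zs"
      then obtain i where i: "i < length zs" "zs ! i = t" by (auto simp: in_set_conv_nth)
      then have "rest ! i = t" using snoc by (simp add: nth_append)
      have il: "i < length rest" using i snoc by simp
      have a1: "rest ! i \<noteq> LeftDimer" using 1(3) il by blast
      have a2: "\<not> right_tile (rest ! i)"
      proof
        assume "right_tile (rest ! i)"
        then have "i = length rest - 1" using R' il by blast
        then show False using i snoc by simp
      qed
      show "t = Void \<or> t = Monomer" using cls a1 a2 \<open>rest ! i = t\<close> by blast
    qed
    show ?thesis
    proof (cases "right_tile y")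
      case True
      then have "SS [y]" by (cases y) (auto simp: SS_def)
      then show ?thesis using that[of zs "[y]"] snoc zs by simp
    next
      case False
      have "y \<noteq> LeftDimer" using 1(3) snoc by (metis length_append_singleton lessI nth_append_length)
      then have "y = Void \<or> y = Monomer" using cls False by blast
      then show ?thesis using that[of rest "[]"] snoc zs by (auto simp: SS_def)
    qed
  qed
  show ?thesis using 1 2 by blast
qed


lemma Ach_iff: "Ach n N \<longleftrightarrow> (\<exists>p k v s. PP p \<and> SS s \<and> n = lc p + 3*k + v + lc s \<and>
   N = particle_number p + k + particle_number s)"
proof
  assume "Ach n N"
  then obtain ts where ts: "valid ts" "lc ts = n" "particle_number ts = N" unfolding Ach_def by blast
  obtain p m s where pms: "ts = p @ m @ s" "PP p" "\<forall>t\<in>set m. t = Void \<or> t = Monomer" "SS s"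
    using valid_struct[OF ts(1)] by blast
  have "3 * particle_number m \<le> lc m" using mid_bound pms(3) by blast
  then show "\<exists>p k v s. PP p \<and> SS s \<and> n = lc p + 3*k + v + lc s \<and>
   N = particle_number p + k + particle_number s"
    using ts pms by (intro exI[of _ p] exI[of _ "particle_number m"] exI[of _ "lc m - 3 * particle_number m"] exI[of _ s]) auto
next
  assume "\<exists>p k v s. PP p \<and> SS s \<and> n = lc p + 3*k + v + lc s \<and>
   N = particle_number p + k + particle_number s"
  then obtain p k v s where h: "PP p" "SS s" "n = lc p + 3*k + v + lc s"
    "N = particle_number p + k + particle_number s" by blast
  have "valid (p @ (replicate k Monomer @ replicate v Void) @ s)"
    by (rule valid_build[OF h(1) _ h(2)]) auto
  then show "Ach n N" unfolding Ach_def using h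
    by (intro exI[of _ "p @ (replicate k Monomer @ replicate v Void) @ s"]) auto
qed

lemma Ach_bound: "Ach n N \<Longrightarrow> 3 * N \<le> n + 4"
  unfolding Ach_iff PP_def SS_def by auto

lemma Ach0: "Ach n 0"
  unfolding Ach_iff PP_def SS_def by (intro exI[of _ "[]"] exI[of _ 0] exI[of _ n]) auto

lemma Ach_low: "n \<ge> 1 \<Longrightarrow> \<exists>N. Ach n N \<and> n \<le> 3 * N"
proof -
  assume "n \<ge> 1"
  have "n mod 3 = 0 \<or> n mod 3 = 1 \<or> n mod 3 = 2" by auto
  moreover have "n = 3 * (n div 3) + n mod 3" by simp
  ultimately show ?thesis
  proof (elim disjE)
    assume "n mod 3 = 0" "n = 3 * (n div 3) + n mod 3"
    then show ?thesis unfolding Ach_iff PP_def SS_def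
      by (intro exI[of _ "n div 3"] conjI exI[of _ "[]"] exI[of _ "n div 3"] exI[of _ 0]) auto
  next
    assume "n mod 3 = 1" "n = 3 * (n div 3) + n mod 3"
    then show ?thesis unfolding Ach_iff PP_def SS_def
      by (intro exI[of _ "n div 3 + 1"] conjI exI[of _ "[]"] exI[of _ "n div 3"] exI[of _ 0] exI[of _ "[RightMono1]"]) auto
  next
    assume "n mod 3 = 2" "n = 3 * (n div 3) + n mod 3"
    then show ?thesis unfolding Ach_iff PP_def SS_def
      by (intro exI[of _ "n div 3 + 1"] conjI exI[of _ "[]"] exI[of _ "n div 3"] exI[of _ 0] exI[of _ "[RightMono2]"]) auto
  qed
qed

lemma Ach_step: "Ach n (Suc N) \<Longrightarrow> Ach n N"
proof -
  assume "Ach n (Suc N)"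
  then obtain p k v s where h: "PP p" "SS s" "n = lc p + 3*k + v + lc s"
    "Suc N = particle_number p + k + particle_number s" unfolding Ach_iff by blast
  show "Ach n N"
  proof (cases k)
    case (Suc k')
    then show ?thesis using h unfolding Ach_iff
      by (intro exI[of _ p] exI[of _ k'] exI[of _ "v+3"] exI[of _ s]) auto
  next
    case 0
    show ?thesis
    proof (cases "s = []")
      case True
      then have "p = [LeftDimer]" using h 0 unfolding PP_def by auto
      then show ?thesis using h 0 True unfolding Ach_iff PP_def SS_def
        by (intro exI[of _ "[]"] exI[of _ 1] exI[of _ "v+2"] exI[of _ "[]"]) auto
    next
      case False
      then have "s = [RightDimer] \<or> s = [RightMono1] \<or> s = [RightMono2]" using h(2) SS_def by auto
      then show ?thesis
      proof (elim disjE)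
        assume s: "s = [RightDimer]"
        show ?thesis using h 0 s unfolding Ach_iff SS_def
          by (intro exI[of _ p] exI[of _ 0] exI[of _ "v+2"] exI[of _ "[RightMono1]"]) auto
      next
        assume s: "s = [RightMono1]"
        show ?thesis using h 0 s unfolding Ach_iff SS_def
          by (intro exI[of _ p] exI[of _ 0] exI[of _ "v+1"] exI[of _ "[]"]) auto
      next
        assume s: "s = [RightMono2]"
        show ?thesis using h 0 s unfolding Ach_iff SS_def
          by (intro exI[of _ p] exI[of _ 0] exI[of _ "v+2"] exI[of _ "[]"]) auto
      qed
    qed
  qed
qed

lemma Ach_down: "Ach n N \<Longrightarrow> M \<le> N \<Longrightarrow> Ach n M"
proof (induction N)
  case 0 then show ?case by simp
next
  case (Suc N)
  then show ?case using Ach_step by (cases "M = Suc N") auto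
qed

lemma rt_eq: "root_tilings L = {ts. valid ts \<and> lc ts = card L}"
  unfolding root_tilings_def valid_def lc_def by auto

lemma img_eq: "particle_number ` root_tilings L = {N. Ach (card L) N}"
  unfolding rt_eq Ach_def by auto

lemma fin: "finite {N. Ach n N}"
  by (rule finite_subset[of _ "{..n+4}"]) (auto dest: Ach_bound)

lemma Nmax_props:
  shows "Ach (card L) (N_max L)" "\<And>N. Ach (card L) N \<Longrightarrow> N \<le> N_max L"
proof -
  have ne: "{N. Ach (card L) N} \<noteq> {}" using Ach0 by blast
  show "Ach (card L) (N_max L)" unfolding N_max_def img_eq using Max_in[OF fin ne] by simp
  show "\<And>N. Ach (card L) N \<Longrightarrow> N \<le> N_max L" unfolding N_max_def img_eq using Max_ge[OF fin] by simp
qed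

lemma main_n:
  fixes L :: "int set"
  assumes "card L \<ge> 1"
  shows "(\<forall>N \<le> N_max L. \<exists>R \<in> root_tilings L. particle_number R = N)"
    "card L \<le> 3 * N_max L" "3 * N_max L \<le> card L + 4"
proof -
  show "\<forall>N \<le> N_max L. \<exists>R \<in> root_tilings L. particle_number R = N"
  proof (intro allI impI)
    fix N assume "N \<le> N_max L"
    then have "Ach (card L) N" using Ach_down Nmax_props(1) by blast
    then show "\<exists>R \<in> root_tilings L. particle_number R = N" unfolding rt_eq Ach_def by auto
  qed
  obtain N where "Ach (card L) N" "card L \<le> 3 * N" using Ach_low assms by blast
  then show "card L \<le> 3 * N_max L" using Nmax_props(2)[of L N] by linarith
  show "3 * N_max L \<le> card L + 4" using Ach_bound Nmax_props(1) by blast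
qed

theorem lemma2p5:
  shows "(\<forall>(a::int) b. a \<le> b \<longrightarrow>
            (\<forall>N \<le> N_max {a..b}. \<exists>R \<in> root_tilings {a..b}. particle_number R = N) \<and>
            1/3 \<le> real (N_max {a..b}) / real (card {a..b}) \<and>
            real (N_max {a..b}) / real (card {a..b}) \<le> 1/3 + 4 / (3 * real (card {a..b})))
      \<and> (\<forall>\<epsilon>>0. \<exists>L. \<forall>(a::int) b. a \<le> b \<longrightarrow> card {a..b} \<ge> L \<longrightarrow>
            \<bar>real (N_max {a..b}) / real (card {a..b}) - 1/3\<bar> < \<epsilon>)"
proof -
  have key: "1/3 \<le> real (N_max {a..b}) / real (card {a..b}) \<and>
            real (N_max {a..b}) / real (card {a..b}) \<le> 1/3 + 4 / (3 * real (card {a..b}))"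
    if "a \<le> b" for a b :: int
  proof -
    define n where "n = card {a..b}"
    define M where "M = N_max {a..b}"
    have n1: "n \<ge> 1" using that unfolding n_def by simp
    have h1: "real n \<le> 3 * real M" using main_n(2)[of "{a..b}"] n1 unfolding n_def M_def by linarith
    have h2: "3 * real M \<le> real n + 4" using main_n(3)[of "{a..b}"] n1 unfolding n_def M_def by linarith
    have np: "real n > 0" using n1 by simp
    have "1/3 \<le> real M / real n" using h1 np by (simp add: field_simps)
    moreover have "real M / real n \<le> 1/3 + 4 / (3 * real n)" using h2 np by (simp add: field_simps)
    ultimately show ?thesis unfolding n_def M_def by blast
  qed
  show ?thesis
  proof (rule conjI)
    show "\<forall>(a::int) b. a \<le> b \<longrightarrow>
            (\<forall>N \<le> N_max {a..b}. \<exists>R \<in> root_tilings {a..b}. particle_number R = N) \<and>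
            1/3 \<le> real (N_max {a..b}) / real (card {a..b}) \<and>
            real (N_max {a..b}) / real (card {a..b}) \<le> 1/3 + 4 / (3 * real (card {a..b}))"
    proof (intro allI impI)
      fix a b :: int assume ab: "a \<le> b"
      have "card {a..b} \<ge> 1" using ab by simp
      then show "(\<forall>N \<le> N_max {a..b}. \<exists>R \<in> root_tilings {a..b}. particle_number R = N) \<and>
            1/3 \<le> real (N_max {a..b}) / real (card {a..b}) \<and>
            real (N_max {a..b}) / real (card {a..b}) \<le> 1/3 + 4 / (3 * real (card {a..b}))"
        using main_n(1)[of "{a..b}"] key[OF ab] by blast
    qed
  next
    show "\<forall>e>0. \<exists>L. \<forall>(a::int) b. a \<le> b \<longrightarrow> card {a..b} \<ge> L \<longrightarrow>
            \<bar>real (N_max {a..b}) / real (card {a..b}) - 1/3\<bar> < e"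
    proof (intro allI impI)
    fix e :: real assume e: "e > 0"
    show "\<exists>L. \<forall>(a::int) b. a \<le> b \<longrightarrow> card {a..b} \<ge> L \<longrightarrow>
            \<bar>real (N_max {a..b}) / real (card {a..b}) - 1/3\<bar> < e"
    proof (intro exI[of _ "nat \<lceil>4 / e\<rceil> + 1"] allI impI)
      fix a b :: int assume ab: "a \<le> b" and L: "nat \<lceil>4 / e\<rceil> + 1 \<le> card {a..b}"
      define n where "n = card {a..b}"
      define x where "x = real (N_max {a..b}) / real n"
      have k: "1/3 \<le> x" "x \<le> 1/3 + 4 / (3 * real n)" using key[OF ab] unfolding x_def n_def by auto
      have "4 / e < real n" using L unfolding n_def by linarith
      then have "4 < e * real n" using e by (simp add: field_simps)
      moreover have np: "real n > 0" using ab unfolding n_def by simp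
      ultimately have "4 / (3 * real n) < e" using e by (simp add: field_simps)
      then show "\<bar>real (N_max {a..b}) / real (card {a..b}) - 1/3\<bar> < e"
        using k unfolding x_def n_def by linarith
    qed
    qed
  qed
qed

end
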